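(* Let $\Phi=(\phi_1,\dots,\phi_K)$, $\phi_i\in\mathbb{R}^d$, be a unit norm tight frame with frame constant $A=K/d$ and coherence $\mu$. Let $c\in\mathbb{R}^K$ satisfy $c_1\ge c_2\ge\dots\ge c_K\ge 0$ and $\|c\|_2=1$, and let $x=c_{p,\sigma}$ with probability $(2^K K!)^{-1}$ for each permutation $p$ of $\{1,\dots,K\}$ and each sign sequence $\sigma\in\{-1,1\}^K$; set $y=\Phi x$. If $c_1>c_2+2\mu\|c\|_1$, then $\Phi$ is a local maximum of $$\max_{\Psi\in\mathcal D}\ \mathbb{E}_y\big(\|\Psi^\star y\|_\infty^2\big).$$ Moreover, for every $\Psi=(\psi_1,\dots,\psi_K)\in\mathcal D$ with $0<\max_i\|\psi_i-\phi_i\|_2\le\varepsilon$ we have $\mathbb{E}_x\|\Psi^\star\Phi x\|_\infty^2<\mathbb{E}_x\|\Phi^\star\Phi x\|_\infty^2$ as soon as $\varepsilon<1/5$ and $$\varepsilon\le\frac{\Big(1-2\frac{c_2+\mu\|c\|_1}{c_2+c_1}\Big)^2}{2A\log\Big(2AK\big/\big(c_1^2-\frac{1-c_1^2}{K-1}\big)\Big)}.$$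
   Context: $\mathcal D$ denotes the set of dictionaries $\Psi=(\psi_1,\dots,\psi_K)$ with $\psi_i\in\mathbb{R}^d$, $\|\psi_i\|_2=1$. A unit norm tight frame with frame constant $A$ is a dictionary in $\mathcal D$ with $\sum_{i=1}^K|\langle\phi_i,v\rangle|^2=A\|v\|_2^2$ for all $v\in\mathbb{R}^d$ (so $A=K/d$). The coherence is $\mu=\max_{i\neq j}|\langle\phi_i,\phi_j\rangle|$. For a sequence $c\in\mathbb{R}^K$, a permutation $p$ and signs $\sigma$, $c_{p,\sigma}\in\mathbb{R}^K$ is defined componentwise by $c_{p,\sigma}(i)=\sigma_i c_{p(i)}$. $\Psi^\star$ denotes the transpose. *)

theory Defs
  imports "HOL-Analysis.Analysis" "HOL-Combinatorics.Permutations"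
begin

definition dicts :: "nat \<Rightarrow> (nat \<Rightarrow> real^'d) set" where
  "dicts K = {\<Psi>. \<forall>i<K. norm (\<Psi> i) = 1}"

definition is_tight_frame :: "nat \<Rightarrow> (nat \<Rightarrow> real^'d) \<Rightarrow> real \<Rightarrow> bool" where
  "is_tight_frame K \<Phi> A \<longleftrightarrow> (\<forall>v::real^'d. (\<Sum>i<K. (\<Phi> i \<bullet> v)^2) = A * (norm v)^2)"

definition is_untf :: "nat \<Rightarrow> (nat \<Rightarrow> real^'d) \<Rightarrow> real \<Rightarrow> bool" where
  "is_untf K \<Phi> A \<longleftrightarrow> \<Phi> \<in> dicts K \<and> is_tight_frame K \<Phi> A"

definition coherence :: "nat \<Rightarrow> (nat \<Rightarrow> real^'d) \<Rightarrow> real" where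
  "coherence K \<Phi> = Max {\<bar>\<Phi> i \<bullet> \<Phi> j\<bar> | i j. i < K \<and> j < K \<and> i \<noteq> j}"

definition synth :: "nat \<Rightarrow> (nat \<Rightarrow> real^'d) \<Rightarrow> (nat \<Rightarrow> real) \<Rightarrow> real^'d" where
  "synth K \<Phi> x = (\<Sum>i<K. x i *\<^sub>R \<Phi> i)"

definition analysis_supnorm :: "nat \<Rightarrow> (nat \<Rightarrow> real^'d) \<Rightarrow> real^'d \<Rightarrow> real" where
  "analysis_supnorm K \<Psi> y = Max ((\<lambda>i. \<bar>\<Psi> i \<bullet> y\<bar>) ` {..<K})"

definition permsign :: "(nat \<Rightarrow> real) \<Rightarrow> (nat \<Rightarrow> nat) \<Rightarrow> (nat \<Rightarrow> real) \<Rightarrow> nat \<Rightarrow> real" where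
  "permsign c p \<sigma> i = \<sigma> i * c (p i)"

definition sign_seqs :: "nat \<Rightarrow> (nat \<Rightarrow> real) set" where
  "sign_seqs K = {..<K} \<rightarrow>\<^sub>E {-1, 1}"

definition expected_obj :: "nat \<Rightarrow> (nat \<Rightarrow> real) \<Rightarrow> (nat \<Rightarrow> real^'d) \<Rightarrow> (nat \<Rightarrow> real^'d) \<Rightarrow> real" where
  "expected_obj K c \<Phi> \<Psi> =
     (\<Sum>p\<in>{p. p permutes {..<K}}. \<Sum>\<sigma>\<in>sign_seqs K.
        (analysis_supnorm K \<Psi> (synth K \<Phi> (permsign c p \<sigma>)))^2) / (2^K * fact K)"

definition dict_dist :: "nat \<Rightarrow> (nat \<Rightarrow> real^'d) \<Rightarrow> (nat \<Rightarrow> real^'d) \<Rightarrow> real" where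
  "dict_dist K \<Psi> \<Phi> = Max ((\<lambda>i. norm (\<Psi> i - \<Phi> i)) ` {..<K})"

end

theory Submission
  imports Defs "HOL-Probability.Hoeffding"
begin


lemma inner_synth: "w \<bullet> synth K \<Phi> x = (\<Sum>j<K. x j * (w \<bullet> \<Phi> j))"
  unfolding synth_def by (simp add: inner_sum_right)

lemma tf_polar:
  assumes "is_tight_frame K \<Phi> A"
  shows "(\<Sum>j<K. (v \<bullet> \<Phi> j) * (w \<bullet> \<Phi> j)) = A * (v \<bullet> w)"
proof -
  have h: "\<And>z. (\<Sum>j<K. (\<Phi> j \<bullet> z)^2) = A * (norm z)^2"
    using assms unfolding is_tight_frame_def by blast
  have e1: "(\<Sum>j<K. (\<Phi> j \<bullet> (v+w))^2) - (\<Sum>j<K. (\<Phi> j \<bullet> (v-w))^2) = 4 * (\<Sum>j<K. (v \<bullet> \<Phi> j) * (w \<bullet> \<Phi> j))"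
    by (simp add: sum_subtractf[symmetric] sum_distrib_left inner_add_right inner_diff_right
        inner_commute power2_eq_square algebra_simps)
  have e2: "(norm (v+w))^2 - (norm (v-w))^2 = 4 * (v \<bullet> w)"
    by (simp add: power2_norm_eq_inner inner_add_left inner_add_right inner_diff_left inner_diff_right inner_commute)
  have "4 * (\<Sum>j<K. (v \<bullet> \<Phi> j) * (w \<bullet> \<Phi> j)) = 4 * (A * (v \<bullet> w))"
    using e1 e2 h[of "v+w"] h[of "v-w"] by (simp add: algebra_simps)
  thus ?thesis by simp
qed

lemma norm_synth_le:
  assumes "is_tight_frame K \<Phi> A"
  shows "(norm (synth K \<Phi> x))^2 \<le> A * (\<Sum>j<K. (x j)^2)"
proof -
  define y where "y = synth K \<Phi> x"
  have h: "(\<Sum>j<K. (\<Phi> j \<bullet> y)^2) = A * (norm y)^2"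
    using assms unfolding is_tight_frame_def by blast
  have "(norm y)^2 = y \<bullet> y" by (simp add: power2_norm_eq_inner)
  also have "\<dots> = (\<Sum>j<K. x j * (y \<bullet> \<Phi> j))" unfolding y_def[symmetric] by (metis inner_synth y_def)
  finally have ny: "(norm y)^2 = (\<Sum>j<K. x j * (y \<bullet> \<Phi> j))" .
  have "((norm y)^2)^2 \<le> (\<Sum>j<K. (x j)^2) * (\<Sum>j<K. (y \<bullet> \<Phi> j)^2)"
    unfolding ny by (rule Cauchy_Schwarz_ineq_sum)
  also have "(\<Sum>j<K. (y \<bullet> \<Phi> j)^2) = A * (norm y)^2" using h by (simp add: inner_commute)
  finally have ineq: "((norm y)^2)^2 \<le> (\<Sum>j<K. (x j)^2) * (A * (norm y)^2)" .
  show ?thesis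
  proof (cases "norm y = 0")
    case True
    have "0 \<le> A * (norm y)^2" using h by (metis sum_nonneg zero_le_power2)
    then have "A * (norm y)^2 \<ge> 0" .
    show ?thesis
    proof (cases "A \<ge> 0")
      case True then show ?thesis using \<open>norm y = 0\<close> unfolding y_def by (simp add: sum_nonneg)
    next
      case False
      obtain z :: "real^'a" where z: "z \<noteq> 0" using vector_choose_size[of 1] by (metis norm_zero zero_neq_one order_refl zero_le_one)
      have "0 \<le> A * (norm z)^2" using assms unfolding is_tight_frame_def by (metis sum_nonneg zero_le_power2)
      moreover have "(norm z)^2 > 0" using z by simp
      ultimately have "A \<ge> 0" by (simp add: zero_le_mult_iff)
      with False show ?thesis by simp
    qed
  next
    case False
    then have pos: "(norm y)^2 > 0" by simp
    have "(norm y)^2 * (norm y)^2 \<le> (A * (\<Sum>j<K. (x j)^2)) * (norm y)^2"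
      using ineq by (simp add: power2_eq_square algebra_simps)
    then show ?thesis unfolding y_def[symmetric] using pos by (meson mult_right_le_imp_le)
  qed
qed

lemma A_ge_1:
  assumes "is_untf K \<Phi> A" "0 < K"
  shows "A \<ge> 1"
proof -
  have h: "(\<Sum>j<K. (\<Phi> j \<bullet> \<Phi> 0)^2) = A * (norm (\<Phi> 0))^2"
    using assms unfolding is_untf_def is_tight_frame_def by blast
  have n: "norm (\<Phi> 0) = 1" using assms unfolding is_untf_def dicts_def by auto
  have "(\<Phi> 0 \<bullet> \<Phi> 0)^2 \<le> (\<Sum>j<K. (\<Phi> j \<bullet> \<Phi> 0)^2)"
    using assms(2) by (intro member_le_sum) auto
  moreover have "\<Phi> 0 \<bullet> \<Phi> 0 = 1" using n by (metis norm_eq_sqrt_inner real_sqrt_eq_1_iff)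
  ultimately show ?thesis using h n by simp
qed

lemma coh_finite: fixes \<Phi> :: "nat \<Rightarrow> real^'d" shows "finite {\<bar>\<Phi> i \<bullet> \<Phi> j\<bar> | i j. i < K \<and> j < K \<and> i \<noteq> j}"
proof -
  have "{\<bar>\<Phi> i \<bullet> \<Phi> j\<bar> | i j. i < K \<and> j < K \<and> i \<noteq> j} \<subseteq> (\<lambda>(i,j). \<bar>\<Phi> i \<bullet> \<Phi> j\<bar>) ` ({..<K} \<times> {..<K})"
    by auto
  moreover have "finite ((\<lambda>(i,j). \<bar>\<Phi> i \<bullet> \<Phi> j\<bar>) ` ({..<K} \<times> {..<K}))" by blast
  ultimately show ?thesis by (rule finite_subset)
qed

lemma coh_le:
  assumes "i < K" "j < K" "i \<noteq> j"
  shows "\<bar>\<Phi> i \<bullet> \<Phi> j\<bar> \<le> coherence K \<Phi>"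
  unfolding coherence_def using assms by (intro Max_ge[OF coh_finite]) auto

lemma coh_nonneg:
  assumes "2 \<le> K"
  shows "0 \<le> coherence K \<Phi>"
  using coh_le[of 0 K 1 \<Phi>] assms by linarith


lemma perm_inv_sum:
  "(\<Sum>p\<in>{p. p permutes S}. f (inv p)) = (\<Sum>p\<in>{p. p permutes S}. f p)"
proof -
  have "(\<Sum>p\<in>{p. p permutes S}. f (inv p)) = (\<Sum>p\<in>{p. p permutes S}. f (inv (inv p)))"
    by (rule sum_permutations_inverse)
  also have "\<dots> = (\<Sum>p\<in>{p. p permutes S}. f p)"
    by (intro sum.cong refl) (simp add: permutes_inv_inv)
  finally show ?thesis .
qed



lemma sym1:
  assumes "0 < K"
  shows "(\<Sum>p\<in>{p. p permutes {..<K::nat}}. h (p 0)) = fact (K - 1) * (\<Sum>i<K. h i :: real)"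
proof -
  let ?P = "{p. p permutes {..<K::nat}}"
  have eq: "(\<Sum>p\<in>?P. h (p 0)) = (\<Sum>p\<in>?P. h (p m))" if m: "m < K" for m
  proof -
    have t: "Transposition.transpose 0 m permutes {..<K}"
      using m assms by (intro permutes_swap_id) auto
    show ?thesis
      using sum_permutations_compose_right[OF t, of "\<lambda>p. h (p 0)"] by simp
  qed
  have "(\<Sum>m<K. (\<Sum>p\<in>?P. h (p m))) = (\<Sum>m<K. (\<Sum>p\<in>?P. h (p 0)))"
    by (rule sum.cong[OF refl]) (simp add: eq)
  then have "real K * (\<Sum>p\<in>?P. h (p 0)) = (\<Sum>m<K. (\<Sum>p\<in>?P. h (p m)))"
    by simp
  also have "\<dots> = (\<Sum>p\<in>?P. (\<Sum>m<K. h (p m)))" by (rule sum.swap)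
  also have "\<dots> = (\<Sum>p\<in>?P. (\<Sum>i<K. h i))"
  proof (rule sum.cong[OF refl])
    fix p assume "p \<in> ?P"
    then have "p permutes {..<K}" by simp
    then show "(\<Sum>m<K. h (p m)) = (\<Sum>i<K. h i)"
      using sum.permute[of p "{..<K}" h] by (simp add: o_def)
  qed
  also have "\<dots> = fact K * (\<Sum>i<K. h i)"
    by (simp add: card_permutations)
  finally have *: "real K * (\<Sum>p\<in>?P. h (p 0)) = fact K * (\<Sum>i<K. h i)" .
  have "fact K = real K * fact (K - 1)"
    using assms by (metis fact_reduce of_nat_fact)
  with * assms show ?thesis by simp
qed

lemma sym2:
  assumes "0 < m" "m < K" "0 < m'" "m' < K"
  shows "(\<Sum>p\<in>{p. p permutes {..<K::nat}}. F (p 0) (p m)) = (\<Sum>p\<in>{p. p permutes {..<K::nat}}. F (p 0) (p m'))"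
proof -
  have t: "Transposition.transpose m m' permutes {..<K}"
    using assms by (intro permutes_swap_id) auto
  show ?thesis
    using sum_permutations_compose_right[OF t, of "\<lambda>p. F (p 0) (p m)"] assms by simp
qed


lemma sign_seqs_val: "\<sigma> \<in> sign_seqs K \<Longrightarrow> j < K \<Longrightarrow> \<sigma> j = -1 \<or> \<sigma> j = 1"
  unfolding sign_seqs_def by (auto simp: PiE_iff)

lemma sign_seqs_sq: "\<sigma> \<in> sign_seqs K \<Longrightarrow> j < K \<Longrightarrow> (\<sigma> j)^2 = 1"
  using sign_seqs_val by fastforce

lemma sign_seqs_abs: "\<sigma> \<in> sign_seqs K \<Longrightarrow> j < K \<Longrightarrow> \<bar>\<sigma> j\<bar> = 1"
  using sign_seqs_val by fastforce

lemma finite_sign_seqs: "finite (sign_seqs K)"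
  unfolding sign_seqs_def by (intro finite_PiE) auto

lemma card_sign_seqs: "card (sign_seqs K) = 2 ^ K"
  unfolding sign_seqs_def by (simp add: card_PiE numeral_2_eq_2)

lemma sum_sign_pair:
  assumes "j < K" "l < K" "j \<noteq> l"
  shows "(\<Sum>\<sigma>\<in>sign_seqs K. \<sigma> j * \<sigma> l) = 0"
proof -
  define g where "g = (\<lambda>\<sigma>::nat\<Rightarrow>real. \<sigma>(j := - \<sigma> j))"
  have gin: "g \<sigma> \<in> sign_seqs K" if "\<sigma> \<in> sign_seqs K" for \<sigma>
    using that assms unfolding g_def sign_seqs_def by (auto simp: PiE_iff extensional_def)
  have gg: "g (g \<sigma>) = \<sigma>" for \<sigma> unfolding g_def by auto
  have "(\<Sum>\<sigma>\<in>sign_seqs K. \<sigma> j * \<sigma> l) = (\<Sum>\<sigma>\<in>sign_seqs K. g \<sigma> j * g \<sigma> l)"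
    by (rule sum.reindex_bij_witness[of _ g g]) (auto simp: gin gg)
  also have "\<dots> = - (\<Sum>\<sigma>\<in>sign_seqs K. \<sigma> j * \<sigma> l)"
    using assms by (simp add: g_def sum_negf[symmetric])
  finally show ?thesis by simp
qed

lemma sum_sign_second:
  "(\<Sum>\<sigma>\<in>sign_seqs K. (\<Sum>j<K. \<sigma> j * a j)^2) = 2^K * (\<Sum>j<K. (a j)^2)"
proof -
  have "(\<Sum>\<sigma>\<in>sign_seqs K. (\<Sum>j<K. \<sigma> j * a j)^2)
      = (\<Sum>\<sigma>\<in>sign_seqs K. \<Sum>j<K. \<Sum>l<K. (\<sigma> j * \<sigma> l) * (a j * a l))"
    by (simp add: power2_eq_square sum_product algebra_simps)
  also have "\<dots> = (\<Sum>j<K. \<Sum>l<K. (\<Sum>\<sigma>\<in>sign_seqs K. \<sigma> j * \<sigma> l) * (a j * a l))"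
    by (simp add: sum.swap[of _ "sign_seqs K"] sum_distrib_right)
  also have "\<dots> = (\<Sum>j<K. 2^K * (a j)^2)"
  proof (rule sum.cong[OF refl])
    fix j assume j: "j \<in> {..<K}"
    have "(\<Sum>l<K. (\<Sum>\<sigma>\<in>sign_seqs K. \<sigma> j * \<sigma> l) * (a j * a l))
        = (\<Sum>l\<in>{j}. (\<Sum>\<sigma>\<in>sign_seqs K. \<sigma> j * \<sigma> l) * (a j * a l))"
      using j sum_sign_pair by (intro sum.mono_neutral_right) auto
    also have "\<dots> = (\<Sum>\<sigma>\<in>sign_seqs K. (\<sigma> j)^2) * (a j)^2"
      by (simp add: power2_eq_square)
    also have "(\<Sum>\<sigma>\<in>sign_seqs K. (\<sigma> j)^2) = (\<Sum>\<sigma>\<in>sign_seqs K. 1)"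
      using j sign_seqs_sq by (intro sum.cong) auto
    finally show "(\<Sum>l<K. (\<Sum>\<sigma>\<in>sign_seqs K. \<sigma> j * \<sigma> l) * (a j * a l)) = 2^K * (a j)^2"
      by (simp add: card_sign_seqs)
  qed
  finally show ?thesis by (simp add: sum_distrib_left)
qed

lemma cosh_le: fixes x :: real shows "exp x + exp (- x) \<le> 2 * exp (x^2 / 2)"
proof -
  have key: "exp y + exp (- y) \<le> 2 * exp (y^2 / 2)" if y: "y \<ge> 0" for y :: real
  proof -
    have h: "- (2*y) * (1/2) + ln (1 + (1/2) * (exp (2*y) - 1)) \<le> (2*y)^2 / 8"
      using y by (intro Hoeffdings_lemma_aux) auto
    have e1: "(2*y)^2/8 = y^2/2" by (simp add: power2_eq_square)
    have e2: "1 + (1/2) * (exp (2*y) - 1) = (1 + exp (2*y)) / 2" by (simp add: field_simps)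
    have "ln ((1 + exp (2*y)) / 2) \<le> y^2/2 + y"
      using h unfolding e1 e2 by linarith
    moreover have pos: "(1 + exp (2*y)) / 2 > 0" by (simp add: add_pos_pos)
    ultimately have "(1 + exp (2*y)) / 2 \<le> exp (y^2/2 + y)"
      by (metis exp_ln exp_le_cancel_iff)
    then have "exp (-y) * ((1 + exp (2*y)) / 2) \<le> exp (-y) * exp (y^2/2 + y)"
      by (intro mult_left_mono) auto
    moreover have "exp (-y) * ((1 + exp (2*y)) / 2) = (exp y + exp (-y)) / 2"
      by (simp add: field_simps exp_add[symmetric])
    moreover have "exp (-y) * exp (y^2/2 + y) = exp (y^2/2)"
      by (simp add: exp_add[symmetric])
    ultimately show ?thesis by simp
  qed
  show ?thesis
  proof (cases "x \<ge> 0")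
    case True show ?thesis using key[OF True] by simp
  next
    case False
    then have "exp (-x) + exp (- (-x)) \<le> 2 * exp ((-x)^2 / 2)" using key[of "-x"] by simp
    then show ?thesis by simp
  qed
qed

lemma mgf_sign:
  "(\<Sum>\<sigma>\<in>sign_seqs K. exp (l * (\<Sum>j<K. \<sigma> j * a j))) \<le> 2^K * exp (l^2 * (\<Sum>j<K. (a j)^2) / 2)"
proof -
  have "(\<Sum>\<sigma>\<in>sign_seqs K. exp (l * (\<Sum>j<K. \<sigma> j * a j)))
      = (\<Sum>\<sigma>\<in>sign_seqs K. \<Prod>j<K. exp (l * (\<sigma> j * a j)))"
    by (simp add: sum_distrib_left exp_sum)
  also have "\<dots> = (\<Prod>j<K. \<Sum>s\<in>{-1,1}. exp (l * (s * a j)))"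
    unfolding sign_seqs_def by (rule prod_sum_PiE[symmetric]) auto
  also have "\<dots> = (\<Prod>j<K. exp (l * a j) + exp (- (l * a j)))"
    by (simp add: add.commute)
  also have "\<dots> \<le> (\<Prod>j<K. 2 * exp ((l * a j)^2 / 2))"
    by (intro prod_mono conjI cosh_le) (auto intro: add_nonneg_nonneg)
  also have "\<dots> = 2^K * exp (l^2 * (\<Sum>j<K. (a j)^2) / 2)"
    by (simp add: prod.distrib exp_sum sum_distrib_left sum_divide_distrib power_mult_distrib)
  finally show ?thesis .
qed

lemma tail_one:
  assumes t: "t > 0" and V: "(\<Sum>j<K. (a j)^2) > 0"
  shows "real (card {\<sigma>\<in>sign_seqs K. t \<le> (\<Sum>j<K. \<sigma> j * a j)}) \<le> 2^K * exp (- (t^2) / (2 * (\<Sum>j<K. (a j)^2)))"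
proof -
  define V where "V = (\<Sum>j<K. (a j)^2)"
  define l where "l = t / V"
  have l0: "l \<ge> 0" using t V by (simp add: l_def V_def)
  let ?S = "{\<sigma>\<in>sign_seqs K. t \<le> (\<Sum>j<K. \<sigma> j * a j)}"
  have "real (card ?S) * exp (l * t) = (\<Sum>\<sigma>\<in>?S. exp (l * t))" by simp
  also have "\<dots> \<le> (\<Sum>\<sigma>\<in>?S. exp (l * (\<Sum>j<K. \<sigma> j * a j)))"
    using l0 by (intro sum_mono) (auto intro: mult_left_mono)
  also have "\<dots> \<le> (\<Sum>\<sigma>\<in>sign_seqs K. exp (l * (\<Sum>j<K. \<sigma> j * a j)))"
    by (intro sum_mono2 finite_sign_seqs) auto
  also have "\<dots> \<le> 2^K * exp (l^2 * V / 2)" unfolding V_def by (rule mgf_sign)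
  finally have "real (card ?S) * exp (l * t) \<le> 2^K * exp (l^2 * V / 2)" .
  then have "real (card ?S) \<le> 2^K * exp (l^2 * V / 2) / exp (l * t)"
    by (simp add: field_simps)
  also have "2^K * exp (l^2 * V / 2) / exp (l * t) = 2^K * exp (l^2 * V / 2 - l * t)"
    by (simp add: exp_diff)
  also have "l^2 * V / 2 - l * t = - (t^2) / (2 * V)"
    using V unfolding l_def V_def by (simp add: field_simps power2_eq_square)
  finally show ?thesis unfolding V_def .
qed

lemma tail_abs:
  assumes t: "t > 0"
  shows "real (card {\<sigma>\<in>sign_seqs K. t \<le> \<bar>\<Sum>j<K. \<sigma> j * a j\<bar>}) \<le>
     (if (\<Sum>j<K. (a j)^2) = 0 then 0 else 2 * 2^K * exp (- (t^2) / (2 * (\<Sum>j<K. (a j)^2))))"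
proof (cases "(\<Sum>j<K. (a j)^2) = 0")
  case True
  then have "\<forall>j<K. a j = 0" by (simp add: sum_nonneg_eq_0_iff)
  then have "(\<Sum>j<K. \<sigma> j * a j) = 0" for \<sigma> by simp
  then have E: "{\<sigma>\<in>sign_seqs K. t \<le> \<bar>\<Sum>j<K. \<sigma> j * a j\<bar>} = {}" using t by auto
  have "real (card {\<sigma>\<in>sign_seqs K. t \<le> \<bar>\<Sum>j<K. \<sigma> j * a j\<bar>}) = 0" by (simp only: E card.empty of_nat_0)
  then show ?thesis using True by simp
next
  case False
  then have V: "(\<Sum>j<K. (a j)^2) > 0" by (simp add: sum_nonneg order_le_neq_trans)
  have V': "(\<Sum>j<K. (- a j)^2) = (\<Sum>j<K. (a j)^2)" by simp
  have "{\<sigma>\<in>sign_seqs K. t \<le> \<bar>\<Sum>j<K. \<sigma> j * a j\<bar>} \<subseteq>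
        {\<sigma>\<in>sign_seqs K. t \<le> (\<Sum>j<K. \<sigma> j * a j)} \<union> {\<sigma>\<in>sign_seqs K. t \<le> (\<Sum>j<K. \<sigma> j * (- a j))}"
    by (auto simp: sum_negf abs_if)
  then have "card {\<sigma>\<in>sign_seqs K. t \<le> \<bar>\<Sum>j<K. \<sigma> j * a j\<bar>} \<le>
        card ({\<sigma>\<in>sign_seqs K. t \<le> (\<Sum>j<K. \<sigma> j * a j)} \<union> {\<sigma>\<in>sign_seqs K. t \<le> (\<Sum>j<K. \<sigma> j * (- a j))})"
    by (intro card_mono) (auto intro: finite_subset[OF _ finite_sign_seqs])
  also have "\<dots> \<le> card {\<sigma>\<in>sign_seqs K. t \<le> (\<Sum>j<K. \<sigma> j * a j)} + card {\<sigma>\<in>sign_seqs K. t \<le> (\<Sum>j<K. \<sigma> j * (- a j))}"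
    by (rule card_Un_le)
  finally have "real (card {\<sigma>\<in>sign_seqs K. t \<le> \<bar>\<Sum>j<K. \<sigma> j * a j\<bar>}) \<le>
       real (card {\<sigma>\<in>sign_seqs K. t \<le> (\<Sum>j<K. \<sigma> j * a j)}) + real (card {\<sigma>\<in>sign_seqs K. t \<le> (\<Sum>j<K. \<sigma> j * (- a j))})"
    by linarith
  also have "\<dots> \<le> 2^K * exp (- (t^2) / (2 * (\<Sum>j<K. (a j)^2))) + 2^K * exp (- (t^2) / (2 * (\<Sum>j<K. (a j)^2)))"
    using tail_one[OF t V] tail_one[OF t, where a="\<lambda>j. - a j" and K=K] V V' by (intro add_mono) simp_all
  finally show ?thesis using False by simp
qed


lemma supnorm_ge:
  "k < K \<Longrightarrow> \<bar>\<Psi> k \<bullet> y\<bar> \<le> analysis_supnorm K \<Psi> y"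
  unfolding analysis_supnorm_def by (intro Max_ge) auto

lemma supnorm_le:
  "0 < K \<Longrightarrow> (\<And>k. k < K \<Longrightarrow> \<bar>\<Psi> k \<bullet> y\<bar> \<le> B) \<Longrightarrow> analysis_supnorm K \<Psi> y \<le> B"
  unfolding analysis_supnorm_def by (subst Max_le_iff) auto

lemma supnorm_eq:
  "i < K \<Longrightarrow> (\<And>k. k < K \<Longrightarrow> \<bar>\<Psi> k \<bullet> y\<bar> \<le> \<bar>\<Psi> i \<bullet> y\<bar>) \<Longrightarrow> analysis_supnorm K \<Psi> y = \<bar>\<Psi> i \<bullet> y\<bar>"
  by (metis antisym supnorm_ge supnorm_le gr_zeroI not_less0)

locale frm =
  fixes K :: nat and \<Phi> :: "nat \<Rightarrow> real^'d" and c :: "nat \<Rightarrow> real" and A :: real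
  assumes K2: "2 \<le> K"
    and untf: "is_untf K \<Phi> A"
    and c_dec: "\<forall>i. i + 1 < K \<longrightarrow> c (i + 1) \<le> c i"
    and c_nonneg: "c (K - 1) \<ge> 0"
    and c_sq: "(\<Sum>i<K. (c i)^2) = 1"
    and gap: "c 0 > c 1 + 2 * coherence K \<Phi> * (\<Sum>i<K. \<bar>c i\<bar>)"
begin

abbreviation "\<mu> \<equiv> coherence K \<Phi>"
definition "n1 = (\<Sum>i<K. \<bar>c i\<bar>)"
definition "T0 = c 0 - \<mu> * n1"
definition "T1 = c 1 + \<mu> * n1"
definition "G = c 0 - c 1 - 2 * \<mu> * n1"

lemma G_eq: "G = T0 - T1" unfolding G_def T0_def T1_def by simp
lemma G_pos: "G > 0" using gap unfolding G_def n1_def by simp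

lemma tf: "is_tight_frame K \<Phi> A" using untf unfolding is_untf_def by simp
lemma A1: "A \<ge> 1" using A_ge_1[OF untf] K2 by simp
lemma unit: "i < K \<Longrightarrow> norm (\<Phi> i) = 1" using untf unfolding is_untf_def dicts_def by simp
lemma unit_inner: "i < K \<Longrightarrow> \<Phi> i \<bullet> \<Phi> i = 1" using unit by (metis norm_eq_sqrt_inner real_sqrt_eq_1_iff)
lemma mu_nn: "\<mu> \<ge> 0" using coh_nonneg[OF K2] .

lemma c_mono: "i \<le> j \<Longrightarrow> j < K \<Longrightarrow> c j \<le> c i"
proof (induction j)
  case 0 then show ?case by simp
next
  case (Suc j)
  show ?case
  proof (cases "i = Suc j")
    case True then show ?thesis by simp
  next
    case False
    then have "i \<le> j" using Suc.prems by simp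
    then have "c j \<le> c i" using Suc by simp
    moreover have "c (Suc j) \<le> c j" using c_dec Suc.prems by (metis Suc_eq_plus1)
    ultimately show ?thesis by simp
  qed
qed

lemma c_nn: "i < K \<Longrightarrow> 0 \<le> c i"
proof -
  assume i: "i < K"
  then have "c (K - 1) \<le> c i" using c_mono[of i "K - 1"] by simp
  then show ?thesis using c_nonneg by simp
qed

lemma n1_eq: "n1 = (\<Sum>i<K. c i)" unfolding n1_def using c_nn by (intro sum.cong) auto
lemma n1_nn: "n1 \<ge> 0" unfolding n1_def by (simp add: sum_nonneg)

lemma c01: "c 1 < c 0" using gap mu_nn n1_nn unfolding n1_def
  by (smt (verit) mult_nonneg_nonneg)
lemma c1_nn: "0 \<le> c 1" using c_nn K2 by simp
lemma c0_pos: "0 < c 0" using c01 c1_nn by simp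

lemma c_le_c0: "i < K \<Longrightarrow> c i \<le> c 0" using c_mono by simp
lemma c_le_c1: "0 < i \<Longrightarrow> i < K \<Longrightarrow> c i \<le> c 1" using c_mono by simp

lemma Kc0: "1 \<le> real K * (c 0)^2"
proof -
  have "(\<Sum>i<K. (c i)^2) \<le> (\<Sum>i<K. (c 0)^2)"
    using c_le_c0 c_nn by (intro sum_mono power_mono) auto
  then show ?thesis using c_sq by simp
qed

lemma c0_le1: "c 0 \<le> 1"
proof -
  have "(c 0)^2 \<le> (\<Sum>i<K. (c i)^2)" using K2 by (intro member_le_sum) auto
  then have "(c 0)^2 \<le> 1" using c_sq by simp
  then show ?thesis using c0_pos by (simp add: power_le_one_iff)
qed

lemma rest_sq: "(\<Sum>i\<in>{1..<K}. (c i)^2) = 1 - (c 0)^2"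
proof -
  have "{..<K} = insert 0 {1..<K}" using K2 by auto
  then have "(\<Sum>i<K. (c i)^2) = (c 0)^2 + (\<Sum>i\<in>{1..<K}. (c i)^2)" by simp
  then show ?thesis using c_sq by simp
qed

definition "Q = (c 0)^2 - (1 - (c 0)^2) / (real K - 1)"

lemma Q_pos: "Q > 0"
proof -
  have "(\<Sum>i\<in>{1..<K}. (c i)^2) \<le> (\<Sum>i\<in>{1..<K}. (c 1)^2)"
    using c_le_c1 c_nn by (intro sum_mono power_mono) auto
  also have "\<dots> = (real K - 1) * (c 1)^2" using K2 by (simp add: of_nat_diff)
  finally have "1 - (c 0)^2 \<le> (real K - 1) * (c 1)^2" using rest_sq by simp
  moreover have "(c 1)^2 < (c 0)^2" using c01 c1_nn by (simp add: power_strict_mono)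
  moreover have "real K - 1 > 0" using K2 by simp
  ultimately have "1 - (c 0)^2 < (real K - 1) * (c 0)^2"
    by (smt (verit) mult_strict_left_mono)
  then have "(1 - (c 0)^2) / (real K - 1) < (c 0)^2" using K2 by (simp add: divide_less_eq mult.commute)
  then show ?thesis unfolding Q_def by simp
qed

lemma Q_le: "Q \<le> (c 0)^2"
proof -
  have "1 - (c 0)^2 \<ge> 0" using c0_le1 c0_pos by (simp add: power_le_one)
  moreover have "real K - 1 > 0" using K2 by simp
  ultimately show ?thesis unfolding Q_def by simp
qed

end


context frm begin

lemma perm_i0:
  assumes p: "p permutes {..<K}"
  shows "inv p 0 < K" "p (inv p 0) = 0"
proof -
  show "p (inv p 0) = 0" using permutes_inverses(1)[OF p] .
  have "inv p 0 \<in> {..<K} \<longleftrightarrow> (0::nat) \<in> {..<K}"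
    using permutes_in_image[OF permutes_inv[OF p]] by blast
  then show "inv p 0 < K" using K2 by simp
qed

lemma perm_lt: "p permutes {..<K} \<Longrightarrow> j < K \<Longrightarrow> p j < K"
  using permutes_in_image by fastforce

lemma perm_ne0:
  assumes p: "p permutes {..<K}" and "j \<noteq> inv p 0"
  shows "p j \<noteq> 0"
  using assms permutes_inv_eq[OF p] by metis

lemma perm_sum: "p permutes {..<K} \<Longrightarrow> (\<Sum>j<K. f (p j)) = (\<Sum>j<K. f j)"
  using sum.permute[of p "{..<K}" f] by (simp add: o_def)

lemma x_abs:
  assumes "p permutes {..<K}" "\<sigma> \<in> sign_seqs K" "j < K"
  shows "\<bar>permsign c p \<sigma> j\<bar> = c (p j)"
  using assms sign_seqs_abs[of \<sigma> K j] c_nn[of "p j"] perm_lt[of p j]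
  by (simp add: permsign_def abs_mult)

lemma x_sq:
  assumes "p permutes {..<K}" "\<sigma> \<in> sign_seqs K" "j < K"
  shows "(permsign c p \<sigma> j)^2 = (c (p j))^2"
  using x_abs[OF assms] by (metis power2_abs)

lemma x_sq_sum:
  assumes "p permutes {..<K}" "\<sigma> \<in> sign_seqs K"
  shows "(\<Sum>j<K. (permsign c p \<sigma> j)^2) = 1"
  using x_sq[OF assms] perm_sum[OF assms(1), of "\<lambda>i. (c i)^2"] c_sq by simp

lemma x_abs_sum:
  assumes "p permutes {..<K}" "\<sigma> \<in> sign_seqs K"
  shows "(\<Sum>j<K. \<bar>permsign c p \<sigma> j\<bar>) = n1"
  using x_abs[OF assms] perm_sum[OF assms(1), of c] n1_eq by simp

lemma norm_y:
  assumes "p permutes {..<K}" "\<sigma> \<in> sign_seqs K"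
  shows "(norm (synth K \<Phi> (permsign c p \<sigma>)))^2 \<le> A"
  using norm_synth_le[OF tf, of "permsign c p \<sigma>"] x_sq_sum[OF assms] by simp

lemma phi_y_dev:
  assumes "p permutes {..<K}" "\<sigma> \<in> sign_seqs K" "k < K"
  shows "\<bar>\<Phi> k \<bullet> synth K \<Phi> (permsign c p \<sigma>) - permsign c p \<sigma> k\<bar> \<le> \<mu> * n1"
proof -
  define x where "x = permsign c p \<sigma>"
  have "\<Phi> k \<bullet> synth K \<Phi> x = (\<Sum>j<K. x j * (\<Phi> k \<bullet> \<Phi> j))" by (rule inner_synth)
  also have "\<dots> = x k * (\<Phi> k \<bullet> \<Phi> k) + (\<Sum>j\<in>{..<K}-{k}. x j * (\<Phi> k \<bullet> \<Phi> j))"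
    using assms(3) by (subst sum.remove[of _ k]) auto
  finally have e: "\<Phi> k \<bullet> synth K \<Phi> x - x k = (\<Sum>j\<in>{..<K}-{k}. x j * (\<Phi> k \<bullet> \<Phi> j))"
    using unit_inner[OF assms(3)] by simp
  have "\<bar>\<Sum>j\<in>{..<K}-{k}. x j * (\<Phi> k \<bullet> \<Phi> j)\<bar> \<le> (\<Sum>j\<in>{..<K}-{k}. \<bar>x j\<bar> * \<mu>)"
    by (rule order_trans[OF sum_abs], rule sum_mono)
       (use assms(3) coh_le in \<open>auto simp: abs_mult intro!: mult_left_mono\<close>)
  also have "\<dots> \<le> (\<Sum>j<K. \<bar>x j\<bar> * \<mu>)"
    using mu_nn by (intro sum_mono2) auto
  also have "\<dots> = \<mu> * n1"
    using x_abs_sum[OF assms(1,2)] unfolding x_def by (simp add: sum_distrib_left[symmetric] mult.commute)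
  finally show ?thesis using e unfolding x_def by simp
qed

lemma T0_bound:
  assumes "p permutes {..<K}" "\<sigma> \<in> sign_seqs K"
  shows "T0 \<le> \<bar>\<Phi> (inv p 0) \<bullet> synth K \<Phi> (permsign c p \<sigma>)\<bar>"
proof -
  have i: "inv p 0 < K" "p (inv p 0) = 0" using perm_i0[OF assms(1)] by auto
  have "\<bar>permsign c p \<sigma> (inv p 0)\<bar> = c 0" using x_abs[OF assms i(1)] i(2) by simp
  then show ?thesis using phi_y_dev[OF assms i(1)] unfolding T0_def by linarith
qed

lemma T1_bound:
  assumes "p permutes {..<K}" "\<sigma> \<in> sign_seqs K" "k < K" "k \<noteq> inv p 0"
  shows "\<bar>\<Phi> k \<bullet> synth K \<Phi> (permsign c p \<sigma>)\<bar> \<le> T1"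
proof -
  have "p k \<noteq> 0" "p k < K" using perm_ne0[OF assms(1,4)] perm_lt[OF assms(1,3)] by auto
  then have "c (p k) \<le> c 1" using c_le_c1 by simp
  then have "\<bar>permsign c p \<sigma> k\<bar> \<le> c 1" using x_abs[OF assms(1-3)] by simp
  then show ?thesis using phi_y_dev[OF assms(1-3)] unfolding T1_def by linarith
qed

lemma P1:
  assumes "p permutes {..<K}" "\<sigma> \<in> sign_seqs K"
  shows "analysis_supnorm K \<Phi> (synth K \<Phi> (permsign c p \<sigma>)) = \<bar>\<Phi> (inv p 0) \<bullet> synth K \<Phi> (permsign c p \<sigma>)\<bar>"
proof (rule supnorm_eq)
  show "inv p 0 < K" using perm_i0[OF assms(1)] by simp
  fix k assume k: "k < K"
  show "\<bar>\<Phi> k \<bullet> synth K \<Phi> (permsign c p \<sigma>)\<bar> \<le> \<bar>\<Phi> (inv p 0) \<bullet> synth K \<Phi> (permsign c p \<sigma>)\<bar>"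
  proof (cases "k = inv p 0")
    case False
    then show ?thesis using T1_bound[OF assms k False] T0_bound[OF assms] G_pos G_eq by linarith
  qed simp
qed

lemma P2:
  assumes "p permutes {..<K}" "\<sigma> \<in> sign_seqs K" and \<Psi>: "\<Psi> \<in> dicts K"
  shows "(analysis_supnorm K \<Psi> (synth K \<Phi> (permsign c p \<sigma>)))^2 \<le>
         (\<Psi> (inv p 0) \<bullet> synth K \<Phi> (permsign c p \<sigma>))^2 +
         A * of_bool (\<exists>k<K. G/2 \<le> \<bar>(\<Psi> k - \<Phi> k) \<bullet> synth K \<Phi> (permsign c p \<sigma>)\<bar>)"
proof -
  define y where "y = synth K \<Phi> (permsign c p \<sigma>)"
  define i where "i = inv p 0"
  have i: "i < K" using perm_i0[OF assms(1)] unfolding i_def by simp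
  show ?thesis
  proof (cases "\<exists>k<K. G/2 \<le> \<bar>(\<Psi> k - \<Phi> k) \<bullet> y\<bar>")
    case False
    then have dev: "\<And>k. k < K \<Longrightarrow> \<bar>\<Psi> k \<bullet> y - \<Phi> k \<bullet> y\<bar> < G/2"
      by (auto simp: inner_diff_left)
    have "analysis_supnorm K \<Psi> y = \<bar>\<Psi> i \<bullet> y\<bar>"
    proof (rule supnorm_eq[OF i])
      fix k assume k: "k < K"
      show "\<bar>\<Psi> k \<bullet> y\<bar> \<le> \<bar>\<Psi> i \<bullet> y\<bar>"
      proof (cases "k = i")
        case False
        have "\<bar>\<Phi> k \<bullet> y\<bar> \<le> T1" using T1_bound[OF assms(1,2) k] False unfolding y_def i_def by simp
        moreover have "T0 \<le> \<bar>\<Phi> i \<bullet> y\<bar>" using T0_bound[OF assms(1,2)] unfolding y_def i_def by simp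
        ultimately show ?thesis using dev[OF k] dev[OF i] G_eq by linarith
      qed simp
    qed
    then show ?thesis using False A1 unfolding y_def i_def by simp
  next
    case True
    have "analysis_supnorm K \<Psi> y \<le> norm y"
    proof (rule supnorm_le)
      show "0 < K" using K2 by simp
      fix k assume k: "k < K"
      have "norm (\<Psi> k) = 1" using \<Psi> k unfolding dicts_def by simp
      then show "\<bar>\<Psi> k \<bullet> y\<bar> \<le> norm y" using Cauchy_Schwarz_ineq2[of "\<Psi> k" y] by simp
    qed
    moreover have "0 \<le> analysis_supnorm K \<Psi> y" using supnorm_ge[OF i] by (rule order_trans[rotated]) simp
    ultimately have "(analysis_supnorm K \<Psi> y)^2 \<le> (norm y)^2" by (simp add: power_mono)
    also have "\<dots> \<le> A" using norm_y[OF assms(1,2)] unfolding y_def .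
    finally have "(analysis_supnorm K \<Psi> y)^2 \<le> A" .
    then have "(analysis_supnorm K \<Psi> y)^2 \<le> (\<Psi> i \<bullet> y)^2 + A"
      using zero_le_power2[of "\<Psi> i \<bullet> y"] by linarith
    then show ?thesis using True unfolding y_def[symmetric] i_def[symmetric] by simp
  qed
qed

end


context frm begin

lemma y_lin:
  "w \<bullet> synth K \<Phi> (permsign c p \<sigma>) = (\<Sum>j<K. \<sigma> j * (c (p j) * (w \<bullet> \<Phi> j)))"
  unfolding inner_synth permsign_def by (simp add: mult.assoc)

lemma sigma_second:
  "(\<Sum>\<sigma>\<in>sign_seqs K. (w \<bullet> synth K \<Phi> (permsign c p \<sigma>))^2) = 2^K * (\<Sum>j<K. (c (p j))^2 * (w \<bullet> \<Phi> j)^2)"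
  unfolding y_lin sum_sign_second by (simp add: power_mult_distrib)

definition "hb \<eta> = (if \<eta> = 0 then 0 else 2 * exp (- (G^2) / (8 * (c 0)^2 * A * \<eta>^2)))"

lemma hb_nn: "0 \<le> hb \<eta>" unfolding hb_def by simp

lemma gain_card:
  assumes p: "p permutes {..<K}"
  shows "real (card {\<sigma>\<in>sign_seqs K. G/2 \<le> \<bar>u \<bullet> synth K \<Phi> (permsign c p \<sigma>)\<bar>}) \<le> 2^K * hb (norm u)"
proof -
  define a where "a = (\<lambda>j. c (p j) * (u \<bullet> \<Phi> j))"
  define V where "V = (\<Sum>j<K. (a j)^2)"
  have tG: "G/2 > 0" using G_pos by simp
  have eqs: "{\<sigma>\<in>sign_seqs K. G/2 \<le> \<bar>u \<bullet> synth K \<Phi> (permsign c p \<sigma>)\<bar>} = {\<sigma>\<in>sign_seqs K. G/2 \<le> \<bar>\<Sum>j<K. \<sigma> j * a j\<bar>}"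
    unfolding y_lin a_def ..
  have T: "real (card {\<sigma>\<in>sign_seqs K. G/2 \<le> \<bar>\<Sum>j<K. \<sigma> j * a j\<bar>}) \<le>
     (if V = 0 then 0 else 2 * 2^K * exp (- ((G/2)^2) / (2 * V)))"
    unfolding V_def by (rule tail_abs[OF tG])
  have Vle: "V \<le> (c 0)^2 * A * (norm u)^2"
  proof -
    have "V \<le> (\<Sum>j<K. (c 0)^2 * (u \<bullet> \<Phi> j)^2)"
      unfolding V_def a_def power_mult_distrib
      using c_le_c0 c_nn perm_lt[OF p] by (intro sum_mono mult_right_mono power_mono) auto
    also have "\<dots> = (c 0)^2 * (\<Sum>j<K. (\<Phi> j \<bullet> u)^2)" by (simp add: sum_distrib_left inner_commute)
    also have "\<dots> = (c 0)^2 * (A * (norm u)^2)" using tf unfolding is_tight_frame_def by simp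
    finally show ?thesis by simp
  qed
  show ?thesis
  proof (cases "V = 0")
    case True then show ?thesis using T eqs hb_nn by simp
  next
    case False
    then have Vpos: "V > 0" unfolding V_def by (simp add: sum_nonneg order_le_neq_trans)
    have "u \<noteq> 0" using False unfolding V_def a_def by auto
    then have np: "norm u > 0" by simp
    have cp: "(c 0)^2 * A * (norm u)^2 > 0" using c0_pos A1 np by simp
    have le1: "(G/2)^2 / (2 * ((c 0)^2 * A * (norm u)^2)) \<le> (G/2)^2 / (2 * V)"
      using Vle Vpos cp A1 np c0_pos by (intro divide_left_mono) (auto intro!: mult_pos_pos)
    have e1: "(G/2)^2 / (2 * ((c 0)^2 * A * (norm u)^2)) = G^2 / (8 * (c 0)^2 * A * (norm u)^2)"
      by (simp add: power_divide field_simps)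
    have "- ((G/2)^2) / (2 * V) \<le> - (G^2) / (8 * (c 0)^2 * A * (norm u)^2)"
      using le1 unfolding e1 by (simp add: minus_divide_left[symmetric])
    then have ex: "exp (- ((G/2)^2) / (2 * V)) \<le> exp (- (G^2) / (8 * (c 0)^2 * A * (norm u)^2))"
      by simp
    have "real (card {\<sigma>\<in>sign_seqs K. G/2 \<le> \<bar>u \<bullet> synth K \<Phi> (permsign c p \<sigma>)\<bar>}) \<le> 2 * 2^K * exp (- ((G/2)^2) / (2 * V))"
      using T False unfolding eqs by simp
    also have "\<dots> \<le> 2 * 2^K * exp (- (G^2) / (8 * (c 0)^2 * A * (norm u)^2))"
      using ex by simp
    also have "\<dots> = 2^K * hb (norm u)" using np unfolding hb_def by simp
    finally show ?thesis .
  qed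
qed

lemma gain_card0:
  assumes p: "p permutes {..<K}" and small: "2 * norm u * sqrt A < G"
  shows "card {\<sigma>\<in>sign_seqs K. G/2 \<le> \<bar>u \<bullet> synth K \<Phi> (permsign c p \<sigma>)\<bar>} = 0"
proof -
  have "\<bar>u \<bullet> synth K \<Phi> (permsign c p \<sigma>)\<bar> < G/2" if s: "\<sigma> \<in> sign_seqs K" for \<sigma>
  proof -
    have "norm (synth K \<Phi> (permsign c p \<sigma>)) \<le> sqrt A"
      using norm_y[OF p s] by (simp add: real_le_rsqrt)
    then have "\<bar>u \<bullet> synth K \<Phi> (permsign c p \<sigma>)\<bar> \<le> norm u * sqrt A"
      by (rule order_trans[OF Cauchy_Schwarz_ineq2 mult_left_mono]) simp
    then show ?thesis using small by simp
  qed
  then have "{\<sigma>\<in>sign_seqs K. G/2 \<le> \<bar>u \<bullet> synth K \<Phi> (permsign c p \<sigma>)\<bar>} = {}" by force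
  then show ?thesis by (simp only: card.empty)
qed

lemma gain_sigma:
  assumes p: "p permutes {..<K}"
  shows "(\<Sum>\<sigma>\<in>sign_seqs K. A * of_bool (\<exists>k<K. G/2 \<le> \<bar>(\<Psi> k - \<Phi> k) \<bullet> synth K \<Phi> (permsign c p \<sigma>)\<bar>))
        \<le> A * (\<Sum>k<K. real (card {\<sigma>\<in>sign_seqs K. G/2 \<le> \<bar>(\<Psi> k - \<Phi> k) \<bullet> synth K \<Phi> (permsign c p \<sigma>)\<bar>}))"
proof -
  have "(\<Sum>\<sigma>\<in>sign_seqs K. of_bool (\<exists>k<K. G/2 \<le> \<bar>(\<Psi> k - \<Phi> k) \<bullet> synth K \<Phi> (permsign c p \<sigma>)\<bar>))
      \<le> (\<Sum>\<sigma>\<in>sign_seqs K. \<Sum>k<K. (of_bool (G/2 \<le> \<bar>(\<Psi> k - \<Phi> k) \<bullet> synth K \<Phi> (permsign c p \<sigma>)\<bar>) :: real))"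
  proof (rule sum_mono)
    fix \<sigma>
    show "(of_bool (\<exists>k<K. G/2 \<le> \<bar>(\<Psi> k - \<Phi> k) \<bullet> synth K \<Phi> (permsign c p \<sigma>)\<bar>) :: real)
      \<le> (\<Sum>k<K. of_bool (G/2 \<le> \<bar>(\<Psi> k - \<Phi> k) \<bullet> synth K \<Phi> (permsign c p \<sigma>)\<bar>))"
    proof (cases "\<exists>k<K. G/2 \<le> \<bar>(\<Psi> k - \<Phi> k) \<bullet> synth K \<Phi> (permsign c p \<sigma>)\<bar>")
      case True
      then obtain k where k: "k < K" "G/2 \<le> \<bar>(\<Psi> k - \<Phi> k) \<bullet> synth K \<Phi> (permsign c p \<sigma>)\<bar>" by blast
      have "(of_bool (G/2 \<le> \<bar>(\<Psi> k - \<Phi> k) \<bullet> synth K \<Phi> (permsign c p \<sigma>)\<bar>) :: real)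
          \<le> (\<Sum>k<K. of_bool (G/2 \<le> \<bar>(\<Psi> k - \<Phi> k) \<bullet> synth K \<Phi> (permsign c p \<sigma>)\<bar>))"
        using k(1) by (intro member_le_sum) auto
      then show ?thesis using True k by simp
    qed (simp add: sum_nonneg)
  qed
  also have "\<dots> = (\<Sum>k<K. \<Sum>\<sigma>\<in>sign_seqs K. (of_bool (G/2 \<le> \<bar>(\<Psi> k - \<Phi> k) \<bullet> synth K \<Phi> (permsign c p \<sigma>)\<bar>) :: real))"
    by (rule sum.swap)
  also have "\<dots> = (\<Sum>k<K. real (card {\<sigma>\<in>sign_seqs K. G/2 \<le> \<bar>(\<Psi> k - \<Phi> k) \<bullet> synth K \<Phi> (permsign c p \<sigma>)\<bar>}))"
    by (intro sum.cong refl) (simp add: of_bool_def sum.If_cases finite_sign_seqs Int_def)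
  finally show ?thesis using A1 by (simp add: sum_distrib_left[symmetric] mult_left_mono)
qed

end


context frm begin

lemma loss_sym:
  assumes D0: "\<And>i. i < K \<Longrightarrow> (\<Sum>j<K. D i j) = 0"
  shows "(\<Sum>p\<in>{p. p permutes {..<K}}. \<Sum>j<K. (c (p j))^2 * D (inv p 0) j)
         = fact (K - 1) * Q * (\<Sum>i<K. D i i)"
proof -
  let ?P = "{p. p permutes {..<K}}"
  have K0: "0 < K" using K2 by simp
  have "(\<Sum>p\<in>?P. \<Sum>j<K. (c (p j))^2 * D (inv p 0) j) = (\<Sum>p\<in>?P. \<Sum>m<K. (c m)^2 * D (inv p 0) (inv p m))"
  proof (rule sum.cong[OF refl])
    fix p assume "p \<in> ?P"
    then have p: "p permutes {..<K}" by simp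
    have "(\<Sum>m<K. (c (p (inv p m)))^2 * D (inv p 0) (inv p m)) = (\<Sum>j<K. (c (p j))^2 * D (inv p 0) j)"
      by (rule perm_sum[OF permutes_inv[OF p], of "\<lambda>j. (c (p j))^2 * D (inv p 0) j"])
    then show "(\<Sum>j<K. (c (p j))^2 * D (inv p 0) j) = (\<Sum>m<K. (c m)^2 * D (inv p 0) (inv p m))"
      by (simp add: permutes_inverses(1)[OF p])
  qed
  also have "\<dots> = (\<Sum>p\<in>?P. \<Sum>m<K. (c m)^2 * D (p 0) (p m))"
    by (rule perm_inv_sum[of "\<lambda>q. \<Sum>m<K. (c m)^2 * D (q 0) (q m)"])
  also have "\<dots> = (\<Sum>m<K. \<Sum>p\<in>?P. (c m)^2 * D (p 0) (p m))"
    by (rule sum.swap)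
  also have "\<dots> = (\<Sum>m<K. (c m)^2 * (\<Sum>p\<in>?P. D (p 0) (p m)))"
    by (simp only: sum_distrib_left)
  also have "\<dots> = (c 0)^2 * (\<Sum>p\<in>?P. D (p 0) (p 0)) + (\<Sum>m\<in>{1..<K}. (c m)^2 * (\<Sum>p\<in>?P. D (p 0) (p m)))"
  proof -
    have "{..<K} = insert 0 {1..<K}" using K2 by auto
    then show ?thesis by simp
  qed
  also have "(\<Sum>m\<in>{1..<K}. (c m)^2 * (\<Sum>p\<in>?P. D (p 0) (p m))) = (\<Sum>m\<in>{1..<K}. (c m)^2 * (\<Sum>p\<in>?P. D (p 0) (p 1)))"
  proof (rule sum.cong[OF refl])
    fix m assume "m \<in> {1..<K}"
    then show "(c m)^2 * (\<Sum>p\<in>?P. D (p 0) (p m)) = (c m)^2 * (\<Sum>p\<in>?P. D (p 0) (p 1))"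
      using sym2[of m K 1 D] K2 by simp
  qed
  also have "\<dots> = (1 - (c 0)^2) * (\<Sum>p\<in>?P. D (p 0) (p 1))"
    using rest_sq by (simp add: sum_distrib_right[symmetric])
  finally have e1: "(\<Sum>p\<in>?P. \<Sum>j<K. (c (p j))^2 * D (inv p 0) j) =
     (c 0)^2 * (\<Sum>p\<in>?P. D (p 0) (p 0)) + (1 - (c 0)^2) * (\<Sum>p\<in>?P. D (p 0) (p 1))" .
  have s1: "(\<Sum>p\<in>?P. D (p 0) (p 0)) = fact (K - 1) * (\<Sum>i<K. D i i)"
    using sym1[OF K0, of "\<lambda>i. D i i"] by simp
  have "(real K - 1) * (\<Sum>p\<in>?P. D (p 0) (p 1)) = (\<Sum>m\<in>{1..<K}. (\<Sum>p\<in>?P. D (p 0) (p 1)))"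
    using K2 by (simp add: of_nat_diff)
  also have "\<dots> = (\<Sum>m\<in>{1..<K}. (\<Sum>p\<in>?P. D (p 0) (p m)))"
  proof (rule sum.cong[OF refl])
    fix m assume "m \<in> {1..<K}"
    then show "(\<Sum>p\<in>?P. D (p 0) (p 1)) = (\<Sum>p\<in>?P. D (p 0) (p m))"
      using sym2[of m K 1 D] K2 by simp
  qed
  also have "\<dots> = (\<Sum>p\<in>?P. \<Sum>m\<in>{1..<K}. D (p 0) (p m))" by (rule sum.swap)
  also have "\<dots> = (\<Sum>p\<in>?P. - D (p 0) (p 0))"
  proof (rule sum.cong[OF refl])
    fix p assume "p \<in> ?P"
    then have p: "p permutes {..<K}" by simp
    have p0: "p 0 < K" using perm_lt[OF p K0] .
    have "{..<K} = insert 0 {1..<K}" using K2 by auto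
    then have "(\<Sum>m<K. D (p 0) (p m)) = D (p 0) (p 0) + (\<Sum>m\<in>{1..<K}. D (p 0) (p m))" by simp
    moreover have "(\<Sum>m<K. D (p 0) (p m)) = 0" using perm_sum[OF p, of "D (p 0)"] D0[OF p0] by simp
    ultimately show "(\<Sum>m\<in>{1..<K}. D (p 0) (p m)) = - D (p 0) (p 0)" by simp
  qed
  also have "\<dots> = - (fact (K - 1) * (\<Sum>i<K. D i i))" using s1 by (simp add: sum_negf)
  finally have s2: "(\<Sum>p\<in>?P. D (p 0) (p 1)) = - (fact (K - 1) * (\<Sum>i<K. D i i)) / (real K - 1)"
    using K2 by (simp add: field_simps)
  have Kne: "real K - 1 \<noteq> 0" using K2 by simp
  show ?thesis unfolding e1 s1 s2 Q_def using Kne by (simp add: field_simps)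
qed

end


lemma ln_ge_1_minus_inv: "0 < x \<Longrightarrow> 1 - 1/x \<le> ln (x::real)"
  using ln_le_minus_one[of "1/x"] by (simp add: ln_div)

lemma ln_25_8: "1 < ln (25/8 :: real)"
proof -
  have "exp 1 < (25/8::real)" using e_less_272 by simp
  then have "ln (exp 1) < ln (25/8::real)" by (subst ln_less_cancel_iff) auto
  then show ?thesis by simp
qed

lemma ln2_ge: "2/3 \<le> ln (2::real)" by (rule ln2_ge_two_thirds)

lemma excl:
  fixes v :: real
  assumes "1 \<le> v" "v < 8"
  shows "v/2 < 2 * ln v + ln (25/8)"
proof (cases "v < 4")
  case True
  have "1 - 1/v \<le> ln v" using assms by (intro ln_ge_1_minus_inv) auto
  moreover have "v/2 + 2/v < 3"
  proof -
    have "(v - 1) * (v - 4) \<le> 0" using assms True by (intro mult_nonneg_nonpos) auto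
    then have "v * v + 4 < 6 * v" using assms by (simp add: algebra_simps)
    then show ?thesis using assms by (simp add: field_simps)
  qed
  ultimately show ?thesis using ln_25_8 by (simp add: field_simps)
next
  case False
  have "1 - 4/v \<le> ln (v/4)" using assms False by (intro ln_ge_1_minus_inv[of "v/4", simplified]) auto
  moreover have "ln (v/4) = ln v - 2 * ln 2"
  proof -
    have "ln (4::real) = ln (2^2)" by simp
    also have "\<dots> = 2 * ln 2" by (subst ln_realpow) auto
    finally show ?thesis using assms by (simp add: ln_div)
  qed
  moreover have "v/2 + 8/v \<le> 5"
  proof -
    have "(v - 2) * (v - 8) \<le> 0" using assms False by (intro mult_nonneg_nonpos) auto
    then have "v * v + 16 \<le> 10 * v" using assms by (simp add: algebra_simps)
    then show ?thesis using assms by (simp add: field_simps)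
  qed
  ultimately show ?thesis using ln_25_8 ln2_ge by (simp add: field_simps)
qed

lemma analytic:
  fixes A K Q c0 c1 G \<epsilon> \<eta> t :: real
  assumes A1: "1 \<le> A" and K2: "2 \<le> K" and Qp: "0 < Q" and Qle: "Q \<le> c0^2" and Kc: "1 \<le> K * c0^2"
    and c0p: "0 < c0" and c0le: "c0 \<le> 1" and c1: "0 \<le> c1" and Gp: "0 < G" and Gle: "G \<le> c0 + c1"
    and eps5: "\<epsilon> < 1/5" and epsb: "\<epsilon> \<le> (G/(c0+c1))^2 / (2 * A * ln(2 * A * K/Q))"
    and tp: "0 < t" and te: "t \<le> \<eta>" and ee: "\<eta> \<le> \<epsilon>" and reg: "G \<le> 2 * \<eta> * sqrt A"
  shows "2 * K * A * exp(-(G^2)/(8 * c0^2 * A * t^2)) < Q * t^2 * (1 - t^2/4)"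
proof -
  define g where "g = G/(c0+c1)"
  have cc: "0 < c0 + c1" using c0p c1 by simp
  have gp: "0 < g" unfolding g_def using Gp cc by simp
  have g1: "g \<le> 1" unfolding g_def using Gle cc by simp
  define L where "L = ln(2 * A * K/Q)"
  have "c0^2 \<le> 1" using c0le c0p by (simp add: power_le_one)
  then have Q1: "Q \<le> 1" using Qle by linarith
  have four: "4 \<le> 2 * A * K/Q"
  proof -
    have "1 * 2 \<le> A * K" using mult_mono[of 1 A 2 K] A1 K2 by simp
    then have "4 \<le> 2 * A * K" by simp
    also have "2 * A * K \<le> 2 * A * K/Q" using Q1 Qp A1 K2 by (simp add: le_divide_eq)
    finally show ?thesis .
  qed
  have ln4: "4/3 \<le> ln (4::real)"
  proof -
    have "ln (4::real) = ln (2^2)" by simp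
    also have "\<dots> = 2 * ln 2" by (subst ln_realpow) auto
    finally show ?thesis using ln2_ge by simp
  qed
  have "ln 4 \<le> L" unfolding L_def using four by (subst ln_le_cancel_iff) auto
  then have L4: "4/3 \<le> L" using ln4 by linarith
  have ep: "0 < \<eta>" "0 < \<epsilon>" using tp te ee by auto
  define s where "s = 1/\<eta>"
  define a where "a = g^2/A"
  define v where "v = a * s"
  have sp: "0 < s" unfolding s_def using ep by simp
  have ap: "0 < a" unfolding a_def using gp A1 by simp
  have "g^2 \<le> 1" using g1 gp by (simp add: power_le_one)
  then have a1: "a \<le> 1" unfolding a_def using A1 by (simp add: divide_le_eq)
  have vp: "0 < v" unfolding v_def using ap sp by simp
  have LV: "L \<le> v/2"
  proof -
    have "\<epsilon> * (2 * A * L) \<le> g^2" using epsb L4 A1 ep unfolding g_def[symmetric] L_def[symmetric]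
      by (simp add: le_divide_eq mult.commute)
    moreover have "\<eta> * (2 * A * L) \<le> \<epsilon> * (2 * A * L)" using ee L4 A1 by (intro mult_right_mono) auto
    ultimately have "\<eta> * (2 * A * L) \<le> g^2" by linarith
    then have "L \<le> g^2 / (2 * A * \<eta>)" using ep A1 by (simp add: le_divide_eq mult.commute mult.left_commute)
    also have "g^2 / (2 * A * \<eta>) = v/2" unfolding v_def a_def s_def by (simp add: field_simps)
    finally show ?thesis .
  qed
  have gc0: "g * c0 \<le> G" unfolding g_def using cc c1 Gp by (simp add: field_simps)
  have c0sq: "c0^2 \<le> 4/(v * s)"
  proof -
    have "g * c0 \<le> 2 * \<eta> * sqrt A" using gc0 reg by simp
    then have "(g * c0)^2 \<le> (2 * \<eta> * sqrt A)^2" using gp c0p by (intro power_mono) auto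
    then have "g^2 * c0^2 \<le> 4 * \<eta>^2 * A" using A1 by (simp add: power_mult_distrib)
    then have "c0^2 \<le> 4 * \<eta>^2 * A / g^2" using gp by (simp add: le_divide_eq mult.commute)
    also have "4 * \<eta>^2 * A / g^2 = 4/(v * s)" unfolding v_def a_def s_def using ep gp A1 by (simp add: field_simps power2_eq_square)
    finally show ?thesis .
  qed
  have big: "(v * s)^2/8 \<le> 2 * A * K/Q"
  proof -
    have vs: "v * s/4 \<le> 1/c0^2" using c0sq vp sp c0p by (simp add: field_simps)
    have "(v * s/4)^2 \<le> (1/c0^2)^2" using vs vp sp by (intro power_mono) auto
    then have "(v * s)^2/8 \<le> 2 * (1/c0^2)^2" by (simp add: power_divide)
    also have "\<dots> \<le> 2 * A * K * (1/c0^2)"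
    proof -
      have "1/c0^2 \<le> K" using Kc c0p by (simp add: divide_le_eq)
      moreover have "K \<le> A * K" using mult_right_mono[of 1 A K] A1 K2 by simp
      ultimately have "1/c0^2 \<le> A * K" by linarith
      then have "(1/c0^2) * (1/c0^2) \<le> (A * K) * (1/c0^2)" using c0p by (intro mult_right_mono) auto
      then show ?thesis by (simp add: power2_eq_square)
    qed
    also have "\<dots> \<le> 2 * A * K * (1/Q)"
    proof -
      have "1/c0^2 \<le> 1/Q" using Qle Qp by (simp add: frac_le)
      then show ?thesis using A1 K2 by (intro mult_left_mono) auto
    qed
    also have "\<dots> = 2 * A * K/Q" by simp
    finally show ?thesis .
  qed
  have LL: "2 * ln v + 2 * ln s - ln 8 \<le> L"
  proof -
    have "ln ((v * s)^2/8) \<le> L" unfolding L_def using big vp sp four by (subst ln_le_cancel_iff) auto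
    moreover have "ln ((v * s)^2/8) = 2 * ln v + 2 * ln s - ln 8" using vp sp by (simp add: ln_div ln_mult ln_realpow)
    ultimately show ?thesis by simp
  qed
  have s5: "5 < s" unfolding s_def using ep ee eps5 by (simp add: field_simps)
  have v1: "1 \<le> v" using LV L4 by simp
  have ln5: "ln (25/8::real) = 2 * ln 5 - ln 8"
  proof -
    have "ln (25::real) = ln (5^2)" by simp
    also have "\<dots> = 2 * ln 5" by (subst ln_realpow) auto
    finally show ?thesis by (simp add: ln_div)
  qed
  have v8: "8 \<le> v"
  proof (rule ccontr)
    assume "\<not> 8 \<le> v"
    then have "v/2 < 2 * ln v + ln (25/8)" using excl v1 by simp
    moreover have "ln 5 < ln s" using s5 by simp
    ultimately show False using LL LV ln5 by linarith
  qed
  have sv: "v \<le> s" unfolding v_def using a1 sp by (simp add: mult_left_le_one_le)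
  define \<beta> where "\<beta> = G^2/(8 * c0^2 * A)"
  have \<beta>a: "a/8 \<le> \<beta>"
  proof -
    have "(g * c0)^2 \<le> G^2" using gc0 gp c0p by (intro power_mono) auto
    then have "g^2 \<le> G^2/c0^2" using c0p by (simp add: le_divide_eq power_mult_distrib)
    then show ?thesis unfolding a_def \<beta>_def using A1 c0p by (simp add: field_simps)
  qed
  have \<beta>s: "v * s/8 \<le> \<beta> * s^2"
  proof -
    have "a/8 * s^2 \<le> \<beta> * s^2" using \<beta>a by (intro mult_right_mono) auto
    moreover have "v * s/8 = a/8 * s^2" unfolding v_def by (simp add: power2_eq_square)
    ultimately show ?thesis by simp
  qed
  have \<beta>s1: "1 \<le> \<beta> * s^2"
  proof -
    have "8 * 5 \<le> v * s" using mult_mono[of 8 v 5 s] v8 s5 by simp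
    then show ?thesis using \<beta>s by simp
  qed
  define u where "u = 1/t^2"
  have up: "0 < u" unfolding u_def using tp by simp
  have us: "s^2 \<le> u" unfolding u_def s_def using tp te by (simp add: field_simps power_mono)
  have lnu: "ln u \<le> 2 * ln s + \<beta> * (u - s^2)"
  proof -
    have "ln (u/s^2) \<le> u/s^2 - 1" using up sp by (intro ln_le_minus_one) simp
    also have "u/s^2 - 1 = (u - s^2)/s^2" using sp by (simp add: field_simps)
    also have "\<dots> \<le> \<beta> * (u - s^2)"
    proof -
      have "1/s^2 \<le> \<beta>" using \<beta>s1 sp by (simp add: field_simps)
      then have "(1/s^2) * (u - s^2) \<le> \<beta> * (u - s^2)" using us by (intro mult_right_mono) auto
      then show ?thesis by simp
    qed
    finally show ?thesis using up sp by (simp add: ln_div ln_realpow)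
  qed
  have ln8: "2 \<le> ln (8::real)"
  proof -
    have "ln (8::real) = ln (2^3)" by simp
    also have "\<dots> = 3 * ln 2" by (subst ln_realpow) auto
    finally show ?thesis using ln2_ge by simp
  qed
  have lnv: "ln 8 \<le> ln v" using v8 by simp
  have key: "L + ln u + 1 < \<beta> * u"
  proof -
    have "L + ln u + 1 \<le> L + 2 * ln s + 1 + \<beta> * (u - s^2)" using lnu by simp
    also have "L + 2 * ln s \<le> v + ln 8 - 2 * ln v" using LL LV by simp
    then have "L + 2 * ln s + 1 + \<beta> * (u - s^2) \<le> v + ln 8 - 2 * ln v + 1 + \<beta> * (u - s^2)" by simp
    also have "v + ln 8 - 2 * ln v + 1 < v * s/8 + \<beta> * (u - s^2) - \<beta> * (u - s^2)"
    proof -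
      have "8 * v \<le> v * v" using mult_right_mono[of 8 v v] v8 by simp
      then have "v \<le> v * v/8" by simp
      also have "v * v/8 \<le> v * s/8" using sv vp by (simp add: mult_left_mono)
      finally show ?thesis using ln8 lnv by simp
    qed
    finally have "L + ln u + 1 < v * s/8 + \<beta> * (u - s^2)" by simp
    also have "\<dots> \<le> \<beta> * s^2 + \<beta> * (u - s^2)" using \<beta>s by simp
    finally show ?thesis by (simp add: algebra_simps)
  qed
  have t15: "t^2 \<le> 1/25"
  proof -
    have "t \<le> 1/5" using te ee eps5 by simp
    then have "t^2 \<le> (1/5)^2" using tp by (intro power_mono) auto
    then show ?thesis by (simp add: power2_eq_square)
  qed
  have l14: "-1 \<le> ln (1 - t^2/4)"
  proof -
    have "1/2 \<le> 1 - t^2/4" using t15 by simp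
    then have "ln (1/2) \<le> ln (1 - t^2/4)" by (subst ln_le_cancel_iff) auto
    moreover have "ln (1/2::real) = - ln 2" by (simp add: ln_div)
    ultimately show ?thesis using ln_2_less_1 by simp
  qed
  have lnu2: "ln u = - ln (t^2)" unfolding u_def using tp by (simp add: ln_div)
  have ex: "G^2/(8 * c0^2 * A * t^2) = \<beta> * u" unfolding \<beta>_def u_def by simp
  have pos: "0 < 2 * K * A" using A1 K2 by simp
  have R: "0 < Q * t^2 * (1 - t^2/4)/(2 * K * A)" using Qp tp t15 pos A1 K2 by (intro divide_pos_pos mult_pos_pos) auto
  have "- (\<beta> * u) < ln (Q * t^2 * (1 - t^2/4)/(2 * K * A))"
  proof -
    have "ln (Q * t^2 * (1 - t^2/4)/(2 * K * A)) = ln Q + ln (t^2) + ln (1 - t^2/4) - ln (2 * K * A)"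
      using Qp tp t15 pos A1 K2 by (simp add: ln_div ln_mult)
    moreover have "L = ln (2 * K * A) - ln Q" unfolding L_def using pos Qp A1 K2 by (simp add: ln_div mult.commute mult.left_commute)
    ultimately show ?thesis using key lnu2 l14 by linarith
  qed
  then have "exp (- (\<beta> * u)) < Q * t^2 * (1 - t^2/4)/(2 * K * A)"
    using R by (metis exp_less_cancel_iff exp_ln)
  then have "2 * K * A * exp (- (\<beta> * u)) < Q * t^2 * (1 - t^2/4)"
    using pos by (simp add: less_divide_eq mult.commute)
  moreover have "-(G^2)/(8 * c0^2 * A * t^2) = - (\<beta> * u)" using ex by simp
  ultimately show ?thesis by simp
qed


lemma dd_ge: "i < K \<Longrightarrow> norm (\<Psi> i - \<Phi> i) \<le> dict_dist K \<Psi> \<Phi>"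
  unfolding dict_dist_def by (intro Max_ge) auto

lemma dd_att: "0 < K \<Longrightarrow> \<exists>i<K. norm (\<Psi> i - \<Phi> i) = dict_dist K \<Psi> \<Phi>"
proof -
  assume K: "0 < K"
  have "dict_dist K \<Psi> \<Phi> \<in> (\<lambda>i. norm (\<Psi> i - \<Phi> i)) ` {..<K}"
    unfolding dict_dist_def using K by (intro Max_in) auto
  then show ?thesis by auto
qed

lemma supnorm_cong: "(\<And>i. i < K \<Longrightarrow> \<Psi> i = \<Psi>' i) \<Longrightarrow> analysis_supnorm K \<Psi> y = analysis_supnorm K \<Psi>' y"
  unfolding analysis_supnorm_def by (intro arg_cong[where f=Max] image_cong) auto

lemma expected_cong: "(\<And>i. i < K \<Longrightarrow> \<Psi> i = \<Psi>' i) \<Longrightarrow> expected_obj K c \<Phi> \<Psi> = expected_obj K c \<Phi> \<Psi>'"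
  unfolding expected_obj_def using supnorm_cong[of K \<Psi> \<Psi>'] by simp

lemma unit_diff:
  fixes u w :: "real^'d"
  assumes "norm u = 1" "norm w = 1"
  shows "1 - (u \<bullet> w)^2 = (norm (u - w))^2 * (1 - (norm (u - w))^2 / 4)"
proof -
  have uu: "u \<bullet> u = 1" "w \<bullet> w = 1" using assms by (metis power2_norm_eq_inner power_one)+
  have "(norm (u - w))^2 = 2 - 2 * (u \<bullet> w)"
    using uu by (simp add: power2_norm_eq_inner inner_diff_left inner_diff_right inner_commute)
  then have uw: "u \<bullet> w = 1 - (norm (u - w))^2 / 2" by (simp add: field_simps)
  have aux: "1 - a^2 = n^2 * (1 - n^2/4)" if "a = 1 - n^2/2" for a n :: real
    unfolding that by (simp add: power2_eq_square field_simps)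
  show ?thesis using aux[OF uw] .
qed

context frm begin

definition "tot \<Psi> = (\<Sum>p\<in>{p. p permutes {..<K}}. \<Sum>\<sigma>\<in>sign_seqs K.
        (analysis_supnorm K \<Psi> (synth K \<Phi> (permsign c p \<sigma>)))^2)"

lemma exp_tot: "expected_obj K c \<Phi> \<Psi> = tot \<Psi> / (2^K * fact K)"
  unfolding expected_obj_def tot_def ..

lemma tot_Phi: "tot \<Phi> = (\<Sum>p\<in>{p. p permutes {..<K}}. 2^K * (\<Sum>j<K. (c (p j))^2 * (\<Phi> (inv p 0) \<bullet> \<Phi> j)^2))"
  unfolding tot_def
proof (rule sum.cong[OF refl])
  fix p assume "p \<in> {p. p permutes {..<K}}"
  then have p: "p permutes {..<K}" by simp
  have "(\<Sum>\<sigma>\<in>sign_seqs K. (analysis_supnorm K \<Phi> (synth K \<Phi> (permsign c p \<sigma>)))^2)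
      = (\<Sum>\<sigma>\<in>sign_seqs K. (\<Phi> (inv p 0) \<bullet> synth K \<Phi> (permsign c p \<sigma>))^2)"
    using P1[OF p] by (intro sum.cong refl) simp
  also have "\<dots> = 2^K * (\<Sum>j<K. (c (p j))^2 * (\<Phi> (inv p 0) \<bullet> \<Phi> j)^2)" by (rule sigma_second)
  finally show "(\<Sum>\<sigma>\<in>sign_seqs K. (analysis_supnorm K \<Phi> (synth K \<Phi> (permsign c p \<sigma>)))^2)
      = 2^K * (\<Sum>j<K. (c (p j))^2 * (\<Phi> (inv p 0) \<bullet> \<Phi> j)^2)" .
qed

lemma tot_Psi:
  assumes \<Psi>: "\<Psi> \<in> dicts K" and B: "\<And>p k. p permutes {..<K} \<Longrightarrow> k < K \<Longrightarrow>
      real (card {\<sigma>\<in>sign_seqs K. G/2 \<le> \<bar>(\<Psi> k - \<Phi> k) \<bullet> synth K \<Phi> (permsign c p \<sigma>)\<bar>}) \<le> 2^K * B k"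
  shows "tot \<Psi> \<le> (\<Sum>p\<in>{p. p permutes {..<K}}. 2^K * (\<Sum>j<K. (c (p j))^2 * (\<Psi> (inv p 0) \<bullet> \<Phi> j)^2))
           + fact K * (A * (2^K * (\<Sum>k<K. B k)))"
proof -
  let ?P = "{p. p permutes {..<K}}"
  have "tot \<Psi> \<le> (\<Sum>p\<in>?P. 2^K * (\<Sum>j<K. (c (p j))^2 * (\<Psi> (inv p 0) \<bullet> \<Phi> j)^2) + A * (2^K * (\<Sum>k<K. B k)))"
    unfolding tot_def
  proof (rule sum_mono)
    fix p assume "p \<in> ?P"
    then have p: "p permutes {..<K}" by simp
    have "(\<Sum>\<sigma>\<in>sign_seqs K. (analysis_supnorm K \<Psi> (synth K \<Phi> (permsign c p \<sigma>)))^2)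
        \<le> (\<Sum>\<sigma>\<in>sign_seqs K. (\<Psi> (inv p 0) \<bullet> synth K \<Phi> (permsign c p \<sigma>))^2 +
         A * of_bool (\<exists>k<K. G/2 \<le> \<bar>(\<Psi> k - \<Phi> k) \<bullet> synth K \<Phi> (permsign c p \<sigma>)\<bar>))"
      using P2[OF p _ \<Psi>] by (intro sum_mono) simp
    also have "\<dots> = (\<Sum>\<sigma>\<in>sign_seqs K. (\<Psi> (inv p 0) \<bullet> synth K \<Phi> (permsign c p \<sigma>))^2) +
         (\<Sum>\<sigma>\<in>sign_seqs K. A * of_bool (\<exists>k<K. G/2 \<le> \<bar>(\<Psi> k - \<Phi> k) \<bullet> synth K \<Phi> (permsign c p \<sigma>)\<bar>))"
      by (rule sum.distrib)
    also have "\<dots> \<le> 2^K * (\<Sum>j<K. (c (p j))^2 * (\<Psi> (inv p 0) \<bullet> \<Phi> j)^2) +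
         A * (\<Sum>k<K. real (card {\<sigma>\<in>sign_seqs K. G/2 \<le> \<bar>(\<Psi> k - \<Phi> k) \<bullet> synth K \<Phi> (permsign c p \<sigma>)\<bar>}))"
      unfolding sigma_second using gain_sigma[OF p] by simp
    also have "\<dots> \<le> 2^K * (\<Sum>j<K. (c (p j))^2 * (\<Psi> (inv p 0) \<bullet> \<Phi> j)^2) + A * (\<Sum>k<K. 2^K * B k)"
      using B[OF p] A1 by (intro add_left_mono mult_left_mono sum_mono) auto
    finally show "(\<Sum>\<sigma>\<in>sign_seqs K. (analysis_supnorm K \<Psi> (synth K \<Phi> (permsign c p \<sigma>)))^2)
        \<le> 2^K * (\<Sum>j<K. (c (p j))^2 * (\<Psi> (inv p 0) \<bullet> \<Phi> j)^2) + A * (2^K * (\<Sum>k<K. B k))"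
      by (simp add: sum_distrib_left)
  qed
  also have "\<dots> = (\<Sum>p\<in>?P. 2^K * (\<Sum>j<K. (c (p j))^2 * (\<Psi> (inv p 0) \<bullet> \<Phi> j)^2)) + fact K * (A * (2^K * (\<Sum>k<K. B k)))"
    by (simp add: sum.distrib card_permutations)
  finally show ?thesis .
qed

lemma tot_diff:
  assumes \<Psi>: "\<Psi> \<in> dicts K"
  shows "(\<Sum>p\<in>{p. p permutes {..<K}}. 2^K * (\<Sum>j<K. (c (p j))^2 * (\<Phi> (inv p 0) \<bullet> \<Phi> j)^2))
       - (\<Sum>p\<in>{p. p permutes {..<K}}. 2^K * (\<Sum>j<K. (c (p j))^2 * (\<Psi> (inv p 0) \<bullet> \<Phi> j)^2))
       = 2^K * (fact (K - 1) * Q * (\<Sum>i<K. 1 - (\<Psi> i \<bullet> \<Phi> i)^2))"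
proof -
  define D where "D = (\<lambda>i j. (\<Phi> i \<bullet> \<Phi> j)^2 - (\<Psi> i \<bullet> \<Phi> j)^2)"
  have D0: "(\<Sum>j<K. D i j) = 0" if i: "i < K" for i
  proof -
    have "(\<Sum>j<K. (\<Phi> j \<bullet> \<Phi> i)^2) = A * (norm (\<Phi> i))^2" using tf unfolding is_tight_frame_def by blast
    moreover have "(\<Sum>j<K. (\<Phi> j \<bullet> \<Psi> i)^2) = A * (norm (\<Psi> i))^2" using tf unfolding is_tight_frame_def by blast
    moreover have "norm (\<Phi> i) = 1" "norm (\<Psi> i) = 1" using unit[OF i] \<Psi> i unfolding dicts_def by auto
    ultimately show ?thesis unfolding D_def by (simp add: sum_subtractf inner_commute)
  qed
  have Dii: "D i i = 1 - (\<Psi> i \<bullet> \<Phi> i)^2" if "i < K" for i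
    unfolding D_def using unit_inner[OF that] by simp
  have "(\<Sum>p\<in>{p. p permutes {..<K}}. 2^K * (\<Sum>j<K. (c (p j))^2 * (\<Phi> (inv p 0) \<bullet> \<Phi> j)^2))
       - (\<Sum>p\<in>{p. p permutes {..<K}}. 2^K * (\<Sum>j<K. (c (p j))^2 * (\<Psi> (inv p 0) \<bullet> \<Phi> j)^2))
       = 2^K * (\<Sum>p\<in>{p. p permutes {..<K}}. \<Sum>j<K. (c (p j))^2 * D (inv p 0) j)"
    unfolding D_def by (simp only: right_diff_distrib sum_subtractf sum_distrib_left)
  also have "\<dots> = 2^K * (fact (K - 1) * Q * (\<Sum>i<K. D i i))" using loss_sym[OF D0] by simp
  also have "(\<Sum>i<K. D i i) = (\<Sum>i<K. 1 - (\<Psi> i \<bullet> \<Phi> i)^2)" using Dii by simp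
  finally show ?thesis .
qed

end


context frm begin

lemma L_pos: "0 < ln (2 * A * K / Q)"
proof -
  have "Q \<le> 1" using Q_le c0_le1 c0_pos by (smt (verit) power_le_one)
  moreover have "2 \<le> A * K" using mult_mono[of 1 A 2 "real K"] A1 K2 by simp
  ultimately have "1 < 2 * A * K / Q" using Q_pos by (simp add: less_divide_eq)
  then show ?thesis by simp
qed

lemma bnd_pos: "0 < (G/(c 0 + c 1))^2 / (2 * A * ln (2 * A * K / Q))"
  using G_pos c0_pos c1_nn A1 L_pos by (intro divide_pos_pos mult_pos_pos) auto

lemma main_strict:
  assumes \<Psi>: "\<Psi> \<in> dicts K" and dpos: "0 < dict_dist K \<Psi> \<Phi>" and dle: "dict_dist K \<Psi> \<Phi> \<le> \<epsilon>"
    and e5: "\<epsilon> < 1/5" and eb: "\<epsilon> \<le> (G/(c 0 + c 1))^2 / (2 * A * ln (2 * A * K / Q))"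
  shows "expected_obj K c \<Phi> \<Psi> < expected_obj K c \<Phi> \<Phi>"
proof -
  let ?P = "{p. p permutes {..<K}}"
  define d where "d = dict_dist K \<Psi> \<Phi>"
  define \<eta> where "\<eta> = (\<lambda>k. norm (\<Psi> k - \<Phi> k))"
  define B where "B = (\<lambda>k. if 2 * d * sqrt A < G then 0 else hb (\<eta> k))"
  have \<eta>d: "\<eta> k \<le> d" if "k < K" for k unfolding \<eta>_def d_def using dd_ge[OF that] .
  have Bc: "real (card {\<sigma>\<in>sign_seqs K. G/2 \<le> \<bar>(\<Psi> k - \<Phi> k) \<bullet> synth K \<Phi> (permsign c p \<sigma>)\<bar>}) \<le> 2^K * B k"
    if p: "p permutes {..<K}" and k: "k < K" for p k
  proof (cases "2 * d * sqrt A < G")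
    case True
    have "2 * norm (\<Psi> k - \<Phi> k) * sqrt A \<le> 2 * d * sqrt A"
      using \<eta>d[OF k] A1 unfolding \<eta>_def by (intro mult_right_mono) auto
    then have "2 * norm (\<Psi> k - \<Phi> k) * sqrt A < G" using True by simp
    then show ?thesis using gain_card0[OF p] True unfolding B_def by simp
  next
    case False
    then show ?thesis using gain_card[OF p] unfolding B_def \<eta>_def by simp
  qed
  have tP: "tot \<Psi> \<le> (\<Sum>p\<in>?P. 2^K * (\<Sum>j<K. (c (p j))^2 * (\<Psi> (inv p 0) \<bullet> \<Phi> j)^2))
           + fact K * (A * (2^K * (\<Sum>k<K. B k)))"
    by (rule tot_Psi[OF \<Psi> Bc])
  have dif: "(\<Sum>p\<in>?P. 2^K * (\<Sum>j<K. (c (p j))^2 * (\<Phi> (inv p 0) \<bullet> \<Phi> j)^2))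
       - (\<Sum>p\<in>?P. 2^K * (\<Sum>j<K. (c (p j))^2 * (\<Psi> (inv p 0) \<bullet> \<Phi> j)^2))
       = 2^K * (fact (K - 1) * Q * (\<Sum>i<K. 1 - (\<Psi> i \<bullet> \<Phi> i)^2))"
    by (rule tot_diff[OF \<Psi>])
  have loss_eq: "1 - (\<Psi> k \<bullet> \<Phi> k)^2 = (\<eta> k)^2 * (1 - (\<eta> k)^2 / 4)" if k: "k < K" for k
    unfolding \<eta>_def using \<Psi> k unit[OF k] unfolding dicts_def by (intro unit_diff) auto
  have \<eta>small: "\<eta> k < 1/5" if "k < K" for k using \<eta>d[OF that] dle e5 unfolding d_def by simp
  have \<eta>nn: "0 \<le> \<eta> k" for k unfolding \<eta>_def by simp
  have fac: "(1 - (\<eta> k)^2 / 4) > 0" if "k < K" for k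
  proof -
    have "\<eta> k * \<eta> k \<le> (1/5) * (1/5)" using \<eta>small[OF that] \<eta>nn[of k] by (intro mult_mono) auto
    then show ?thesis by (simp add: power2_eq_square)
  qed
  have strict: "real K * A * B k < Q * (1 - (\<Psi> k \<bullet> \<Phi> k)^2)" if k: "k < K" and pos: "0 < \<eta> k" for k
  proof (cases "2 * d * sqrt A < G")
    case True
    have "0 < Q * ((\<eta> k)^2 * (1 - (\<eta> k)^2 / 4))" using Q_pos fac[OF k] pos by simp
    then show ?thesis using True unfolding B_def loss_eq[OF k] by simp
  next
    case False
    have an: "2 * real K * A * exp (- (G^2) / (8 * (c 0)^2 * A * (\<eta> k)^2)) < Q * (\<eta> k)^2 * (1 - (\<eta> k)^2 / 4)"
    proof (rule analytic[where ?c1.0 = "c 1" and \<epsilon> = \<epsilon> and \<eta> = d])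
      show "1 \<le> A" by (rule A1)
      show "2 \<le> real K" using K2 by simp
      show "0 < Q" by (rule Q_pos)
      show "Q \<le> (c 0)^2" by (rule Q_le)
      show "1 \<le> real K * (c 0)^2" by (rule Kc0)
      show "0 < c 0" by (rule c0_pos)
      show "c 0 \<le> 1" by (rule c0_le1)
      show "0 \<le> c 1" by (rule c1_nn)
      show "0 < G" by (rule G_pos)
      show "G \<le> c 0 + c 1" using mu_nn n1_nn c1_nn unfolding G_def by (smt (verit) mult_nonneg_nonneg)
      show "\<epsilon> < 1/5" by (rule e5)
      show "\<epsilon> \<le> (G / (c 0 + c 1))^2 / (2 * A * ln (2 * A * real K / Q))" using eb by simp
      show "0 < \<eta> k" by (rule pos)
      show "\<eta> k \<le> d" by (rule \<eta>d[OF k])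
      show "d \<le> \<epsilon>" using dle unfolding d_def .
      show "G \<le> 2 * d * sqrt A" using False by simp
    qed
    have Bk: "B k = 2 * exp (- (G^2) / (8 * (c 0)^2 * A * (\<eta> k)^2))"
      using False pos unfolding B_def hb_def by simp
    have eq: "real K * A * B k = 2 * real K * A * exp (- (G^2) / (8 * (c 0)^2 * A * (\<eta> k)^2))"
      unfolding Bk by simp
    have gr: "Q * (\<eta> k)^2 * (1 - (\<eta> k)^2 / 4) = Q * ((\<eta> k)^2 * (1 - (\<eta> k)^2 / 4))" by simp
    show ?thesis unfolding loss_eq[OF k] using eq an gr by linarith
  qed
  have term_le: "real K * A * B k \<le> Q * (1 - (\<Psi> k \<bullet> \<Phi> k)^2)" if k: "k < K" for k
  proof (cases "\<eta> k = 0")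
    case True
    have rhs_nn: "0 \<le> Q * (1 - (\<Psi> k \<bullet> \<Phi> k)^2)"
      unfolding loss_eq[OF k] using Q_pos fac[OF k] by simp
    have "B k = 0" using True unfolding B_def hb_def by simp
    then show ?thesis using rhs_nn by simp
  next
    case False
    then have "0 < \<eta> k" using \<eta>nn[of k] by simp
    then show ?thesis using strict[OF k] by simp
  qed
  obtain k0 where k0: "k0 < K" "\<eta> k0 = d" using dd_att[of K \<Psi> \<Phi>] K2 unfolding \<eta>_def d_def by auto
  have "(\<Sum>k<K. real K * A * B k) < (\<Sum>k<K. Q * (1 - (\<Psi> k \<bullet> \<Phi> k)^2))"
  proof (rule sum_strict_mono_ex1)
    show "finite {..<K}" by simp
    show "\<forall>k\<in>{..<K}. real K * A * B k \<le> Q * (1 - (\<Psi> k \<bullet> \<Phi> k)^2)" using term_le by simp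
    show "\<exists>k\<in>{..<K}. real K * A * B k < Q * (1 - (\<Psi> k \<bullet> \<Phi> k)^2)"
      using strict[OF k0(1)] k0 dpos unfolding d_def by auto
  qed
  then have sl: "real K * (A * (\<Sum>k<K. B k)) < Q * (\<Sum>k<K. 1 - (\<Psi> k \<bullet> \<Phi> k)^2)"
    by (simp add: sum_distrib_left mult.assoc)
  have fK: "fact K = real K * fact (K - 1)"
    using K2 by (metis fact_reduce of_nat_fact not_numeral_le_zero gr0I)
  have fpos: "(0::real) < 2^K * fact (K - 1)" by simp
  have "fact K * (A * (2^K * (\<Sum>k<K. B k))) = (2^K * fact (K - 1)) * (real K * (A * (\<Sum>k<K. B k)))"
    unfolding fK by (simp add: algebra_simps)
  also have "\<dots> < (2^K * fact (K - 1)) * (Q * (\<Sum>k<K. 1 - (\<Psi> k \<bullet> \<Phi> k)^2))"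
    using sl fpos by (intro mult_strict_left_mono) auto
  also have "\<dots> = 2^K * (fact (K - 1) * Q * (\<Sum>i<K. 1 - (\<Psi> i \<bullet> \<Phi> i)^2))" by (simp add: algebra_simps)
  finally have "tot \<Psi> < tot \<Phi>" using tP dif tot_Phi by linarith
  then show ?thesis unfolding exp_tot by (intro divide_strict_right_mono) auto
qed

end


theorem theorem2:
  fixes K :: nat and \<Phi> :: "nat \<Rightarrow> real^'d" and c :: "nat \<Rightarrow> real"
  defines "A \<equiv> real K / real CARD('d)"
  defines "\<mu> \<equiv> coherence K \<Phi>"
  assumes K2: "2 \<le> K"
    and untf: "is_untf K \<Phi> A"
    and c_dec: "\<forall>i. i + 1 < K \<longrightarrow> c (i + 1) \<le> c i"
    and c_nonneg: "c (K - 1) \<ge> 0"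
    and c_norm: "sqrt (\<Sum>i<K. (c i)^2) = 1"
    and gap: "c 0 > c 1 + 2 * \<mu> * (\<Sum>i<K. \<bar>c i\<bar>)"
  shows "(\<exists>\<delta>>0. \<forall>\<Psi>\<in>dicts K. dict_dist K \<Psi> \<Phi> \<le> \<delta> \<longrightarrow>
            expected_obj K c \<Phi> \<Psi> \<le> expected_obj K c \<Phi> \<Phi>)
       \<and> (\<forall>\<epsilon>. \<epsilon> < 1/5 \<and>
            \<epsilon> \<le> (1 - 2 * (c 1 + \<mu> * (\<Sum>i<K. \<bar>c i\<bar>)) / (c 1 + c 0))^2 /
                 (2 * A * ln (2 * A * K / ((c 0)^2 - (1 - (c 0)^2) / (K - 1))))
          \<longrightarrow> (\<forall>\<Psi>\<in>dicts K. 0 < dict_dist K \<Psi> \<Phi> \<and> dict_dist K \<Psi> \<Phi> \<le> \<epsilon> \<longrightarrow>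
                 expected_obj K c \<Phi> \<Psi> < expected_obj K c \<Phi> \<Phi>))"
proof -
  have c_sq: "(\<Sum>i<K. (c i)^2) = 1" using c_norm by simp
  interpret F: frm K \<Phi> c A
    using K2 untf c_dec c_nonneg c_sq gap unfolding \<mu>_def by unfold_locales auto
  have cc: "0 < c 0 + c 1" using F.c0_pos F.c1_nn by simp
  have e1: "1 - 2 * (c 1 + \<mu> * (\<Sum>i<K. \<bar>c i\<bar>)) / (c 1 + c 0) = F.G / (c 0 + c 1)"
    unfolding F.G_def F.n1_def \<mu>_def using cc by (simp add: field_simps)
  have e2: "(c 0)^2 - (1 - (c 0)^2) / (K - 1) = F.Q"
    unfolding F.Q_def using K2 by (simp add: of_nat_diff)
  define bnd where "bnd = (F.G/(c 0 + c 1))^2 / (2 * A * ln (2 * A * K / F.Q))"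
  have bnd_eq: "(1 - 2 * (c 1 + \<mu> * (\<Sum>i<K. \<bar>c i\<bar>)) / (c 1 + c 0))^2 /
                 (2 * A * ln (2 * A * K / ((c 0)^2 - (1 - (c 0)^2) / (K - 1)))) = bnd"
    unfolding e1 e2 bnd_def ..
  have bpos: "0 < bnd" unfolding bnd_def by (rule F.bnd_pos)
  have part2: "\<forall>\<epsilon>. \<epsilon> < 1/5 \<and> \<epsilon> \<le> bnd \<longrightarrow> (\<forall>\<Psi>\<in>dicts K. 0 < dict_dist K \<Psi> \<Phi> \<and> dict_dist K \<Psi> \<Phi> \<le> \<epsilon> \<longrightarrow>
                 expected_obj K c \<Phi> \<Psi> < expected_obj K c \<Phi> \<Phi>)"
    unfolding bnd_def using F.main_strict by blast
  have part1: "\<exists>\<delta>>0. \<forall>\<Psi>\<in>dicts K. dict_dist K \<Psi> \<Phi> \<le> \<delta> \<longrightarrow>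
            expected_obj K c \<Phi> \<Psi> \<le> expected_obj K c \<Phi> \<Phi>"
  proof (intro exI[of _ "min (1/10) bnd"] conjI ballI impI)
    show "0 < min (1/10) bnd" using bpos by simp
    fix \<Psi> assume \<Psi>: "\<Psi> \<in> dicts K" and d: "dict_dist K \<Psi> \<Phi> \<le> min (1/10) bnd"
    show "expected_obj K c \<Phi> \<Psi> \<le> expected_obj K c \<Phi> \<Phi>"
    proof (cases "0 < dict_dist K \<Psi> \<Phi>")
      case True
      have "min (1/10) bnd < (1/5::real)" by simp
      moreover have "min (1/10) bnd \<le> bnd" by simp
      ultimately have "expected_obj K c \<Phi> \<Psi> < expected_obj K c \<Phi> \<Phi>"
        using part2 \<Psi> True d by blast
      then show ?thesis by simp
    next
      case False
      have "\<Psi> i = \<Phi> i" if i: "i < K" for i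
      proof -
        have "norm (\<Psi> i - \<Phi> i) \<le> dict_dist K \<Psi> \<Phi>" by (rule dd_ge[OF i])
        then have "norm (\<Psi> i - \<Phi> i) \<le> 0" using False by linarith
        then show ?thesis by simp
      qed
      then have "expected_obj K c \<Phi> \<Psi> = expected_obj K c \<Phi> \<Phi>" by (rule expected_cong)
      then show ?thesis by simp
    qed
  qed
  show ?thesis unfolding bnd_eq using part1 part2 by blast
qed


end
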